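(* For every $n\ge1$ there is a bijection $\sigma\mapsto\sigma'$ from $\mathcal{W}^*_{2n+1}$ onto $\mathcal{X}_{2n}$ such that $\mathrm{des}(\sigma')=\mathrm{des}(\sigma)$. In particular $\sum_{\sigma\in\mathcal{W}^*_{2n+1}}t^{\mathrm{des}(\sigma)}=\sum_{\sigma\in\mathcal{X}_{2n}}t^{\mathrm{des}(\sigma)}$.
   Context: For $\sigma\in\mathfrak{S}_m$ (permutations of $[m]$), a descent is an index $i$ with $\sigma_i>\sigma_{i+1}$, with descent pair $(\sigma_i,\sigma_{i+1})$; $\mathrm{des}(\sigma)$ is the number of descents. $\mathcal{X}_{2n}$ is the set of permutations of $[2n]$ whose every descent pair has even first entry and odd second entry. $\mathcal{W}^*_{2n+1}$ is the set of permutations of $[2n+1]$ whose every descent pair consists of two odd entries and whose last entry is odd. *)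

theory Defs
  imports Main
begin

text \<open>Permutations of [m] are represented in one-line notation as lists
  sigma = [sigma_1, ..., sigma_m] (0-indexed in Isabelle).\<close>

definition perms :: "nat \<Rightarrow> nat list set" where
  "perms m = {xs. distinct xs \<and> set xs = {1..m}}"

definition descents :: "nat list \<Rightarrow> nat set" where
  "descents xs = {i. Suc i < length xs \<and> xs ! i > xs ! Suc i}"

definition des :: "nat list \<Rightarrow> nat" where
  "des xs = card (descents xs)"

definition X_set :: "nat \<Rightarrow> nat list set" where
  "X_set n = {xs \<in> perms (2*n). \<forall>i\<in>descents xs. even (xs ! i) \<and> odd (xs ! Suc i)}"

definition Wstar_set :: "nat \<Rightarrow> nat list set" where
  "Wstar_set n = {xs \<in> perms (2*n+1). (\<forall>i\<in>descents xs. odd (xs ! i) \<and> odd (xs ! Suc i))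
                   \<and> odd (last xs)}"

end

theory Submission
  imports Defs "HOL-Library.Multiset"
begin

fun dc :: "nat list \<Rightarrow> nat" where
  "dc [] = 0" | "dc [x] = 0" | "dc (x # y # zs) = (if y < x then 1 else 0) + dc (y # zs)"

lemma dc_Cons: "dc (x # xs) = dc xs + (if xs \<noteq> [] \<and> hd xs < x then 1 else 0)"
  by (cases xs) auto

lemma dc_append: "dc (xs @ ys) = dc xs + dc ys + (if xs \<noteq> [] \<and> ys \<noteq> [] \<and> hd ys < last xs then 1 else 0)"
  by (induction xs rule: induct_list012) (auto simp: dc_Cons)

lemma descents_Cons: "descents (x # xs) = (if xs \<noteq> [] \<and> hd xs < x then {0} else {}) \<union> Suc ` descents xs"
proof (rule set_eqI)
  fix i
  show "i \<in> descents (x # xs) \<longleftrightarrow> i \<in> (if xs \<noteq> [] \<and> hd xs < x then {0} else {}) \<union> Suc ` descents xs"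
  proof (cases i)
    case 0 then show ?thesis by (cases xs) (auto simp: descents_def)
  next
    case (Suc j) then show ?thesis by (auto simp: descents_def)
  qed
qed

lemma des_dc: "des xs = dc xs"
proof (induction xs)
  case Nil then show ?case by (simp add: des_def descents_def)
next
  case (Cons x xs)
  have fin: "finite (descents xs)" unfolding descents_def by (rule finite_subset[of _ "{..<length xs}"]) auto
  have "0 \<notin> Suc ` descents xs" by auto
  then have "card (descents (x # xs)) = (if xs \<noteq> [] \<and> hd xs < x then 1 else 0) + card (Suc ` descents xs)"
    unfolding descents_Cons using fin by (auto simp: card_insert_if)
  also have "card (Suc ` descents xs) = card (descents xs)" by (simp add: card_image)
  finally show ?case using Cons by (simp add: des_def dc_Cons)
qed

definition spl :: "'a \<Rightarrow> 'a list \<Rightarrow> 'a list \<times> 'a list" where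
  "spl x xs = (takeWhile (\<lambda>y. y \<noteq> x) xs, tl (dropWhile (\<lambda>y. y \<noteq> x) xs))"

lemma spl_app: "x \<notin> set ys \<Longrightarrow> spl x (ys @ x # zs) = (ys, zs)"
  proof -
  assume x: "x \<notin> set ys"
  then have "dropWhile (\<lambda>y. y \<noteq> x) (ys @ x # zs) = x # zs"
    by (subst dropWhile_append2) auto
  moreover have "takeWhile (\<lambda>y. y \<noteq> x) (ys @ x # zs) = ys"
    using x by (subst takeWhile_append2) auto
  ultimately show ?thesis unfolding spl_def by simp
qed

lemma tw_split: "(\<forall>x\<in>set G. P x) \<Longrightarrow> (V = [] \<or> \<not> P (hd V)) \<Longrightarrow> takeWhile P (G @ V) = G \<and> dropWhile P (G @ V) = V"
  by (cases V) (auto simp: takeWhile_tail dropWhile_append3)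

lemma tw_rsplit: "(\<forall>x\<in>set G. P x) \<Longrightarrow> (V = [] \<or> \<not> P (last V)) \<Longrightarrow>
   rev (takeWhile P (rev (V @ G))) = G \<and> rev (dropWhile P (rev (V @ G))) = V"
  proof -
  assume a1: "\<forall>x\<in>set G. P x" and a2: "V = [] \<or> \<not> P (last V)"
  have "takeWhile P (rev G @ rev V) = rev G \<and> dropWhile P (rev G @ rev V) = rev V"
    using tw_split[of "rev G" P "rev V"] a1 a2 by (cases V rule: rev_cases) auto
  then show ?thesis by simp
qed

definition topk :: "nat \<Rightarrow> nat \<Rightarrow> bool" where
  "topk k x \<longleftrightarrow> (odd x \<and> 2*k < x) \<or> (even x \<and> x \<le> 2*k)"

definition okp :: "nat \<Rightarrow> nat \<Rightarrow> nat \<Rightarrow> bool" where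
  "okp k x y \<longleftrightarrow> x < y \<or> (odd y \<and> topk k x)"

definition CC :: "nat \<Rightarrow> nat \<Rightarrow> nat list set" where
  "CC n k = {w. distinct w \<and> set w = {0..2*n+1} \<and> w \<noteq> [] \<and> hd w = 0 \<and> successively (okp k) w
              \<and> odd (last w) \<and> 2*k < last w}"

definition swp :: "nat \<Rightarrow> nat \<Rightarrow> nat list \<Rightarrow> nat list" where
  "swp a b w = map (\<lambda>x. if x = a then b else if x = b then a else x) w"

definition fw :: "nat \<Rightarrow> nat \<Rightarrow> nat list \<Rightarrow> nat list" where
  "fw a b w = (let A1 = fst (spl a w); A2 = snd (spl a w); B1 = fst (spl b w); B2 = snd (spl b w) in
    if A2 \<noteq> [] \<and> a < hd A2 then w
    else if a \<in> set B1 then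
      (let X2 = fst (spl b A2) in
       if last A1 < a then swp a b w
       else (let G = takeWhile (\<lambda>x. b < x) B2; V = dropWhile (\<lambda>x. b < x) B2 in
         if V \<noteq> [] then A1 @ a # G @ X2 @ b # V else A1 @ a # b # X2 @ B2))
    else
      (let X2 = fst (spl a B2); G = takeWhile (\<lambda>x. b < x) X2; V = dropWhile (\<lambda>x. b < x) X2 in
       if last A1 < a then (if A2 \<noteq> [] then swp a b w else B1 @ a # b # V @ G)
       else B1 @ b # V @ a # G @ A2))"

definition bw :: "nat \<Rightarrow> nat \<Rightarrow> nat list \<Rightarrow> nat list" where
  "bw a b v = (let A1 = fst (spl a v); A2 = snd (spl a v); B1 = fst (spl b v); B2 = snd (spl b v) in
    if B2 \<noteq> [] \<and> b < hd B2 then v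
    else if b \<in> set A1 then
      (if last A1 < a then swp a b v
       else (let Y = fst (spl a B2); G = takeWhile (\<lambda>x. b < x) A2; R = dropWhile (\<lambda>x. b < x) A2 in
          B1 @ b # G @ Y @ a # R))
    else
      (let Y = fst (spl b A2) in
       if Y = [] then
         (let G = rev (takeWhile (\<lambda>x. b < x) (rev B2)); V = rev (dropWhile (\<lambda>x. b < x) (rev B2)) in
          if last A1 < a then A1 @ b # G @ V @ [a] else A1 @ a # V @ b # G)
       else if last A1 < a then swp a b v
       else (let G = takeWhile (\<lambda>x. b < x) Y; Y' = dropWhile (\<lambda>x. b < x) Y in
          A1 @ a # Y' @ b # G @ B2)))"

lemma swp_id: "a \<notin> set xs \<Longrightarrow> b \<notin> set xs \<Longrightarrow> swp a b xs = xs"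
  unfolding swp_def by (induction xs) auto

lemma swp_I: "a \<noteq> b \<Longrightarrow> a \<notin> set X1 \<Longrightarrow> b \<notin> set X1 \<Longrightarrow> a \<notin> set X2 \<Longrightarrow> b \<notin> set X2 \<Longrightarrow> a \<notin> set X3 \<Longrightarrow> b \<notin> set X3 \<Longrightarrow>
   swp a b (X1 @ a # X2 @ b # X3) = X1 @ b # X2 @ a # X3"
proof -
  assume h: "a \<noteq> b" "a \<notin> set X1" "b \<notin> set X1" "a \<notin> set X2" "b \<notin> set X2" "a \<notin> set X3" "b \<notin> set X3"
  have m: "\<And>xs. a \<notin> set xs \<Longrightarrow> b \<notin> set xs \<Longrightarrow> map (\<lambda>x. if x = a then b else if x = b then a else x) xs = xs"
    by (rule map_idI) auto
  show ?thesis unfolding swp_def using h m[of X1] m[of X2] m[of X3] by simp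
qed

lemma swp_comm: "a \<noteq> b \<Longrightarrow> swp a b xs = swp b a xs"
  unfolding swp_def by (rule map_cong) auto

lemma swp_II: "a \<noteq> b \<Longrightarrow> a \<notin> set X1 \<Longrightarrow> b \<notin> set X1 \<Longrightarrow> a \<notin> set X2 \<Longrightarrow> b \<notin> set X2 \<Longrightarrow> a \<notin> set X3 \<Longrightarrow> b \<notin> set X3 \<Longrightarrow>
   swp a b (X1 @ b # X2 @ a # X3) = X1 @ a # X2 @ b # X3"
  using swp_I[of b a X1 X2 X3] swp_comm[of a b] by auto

lemma spl_I: assumes "a \<noteq> b" "a \<notin> set X1" "b \<notin> set X1" "b \<notin> set X2"
  shows "spl a (X1 @ a # X2 @ b # X3) = (X1, X2 @ b # X3)"
        "spl b (X1 @ a # X2 @ b # X3) = (X1 @ a # X2, X3)"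
  using assms spl_app[of a X1 "X2 @ b # X3"] spl_app[of b "X1 @ a # X2" X3] by auto

context
  fixes a b :: nat and X1 X2 X3 :: "nat list"
  assumes ab: "a < b" and d: "a \<notin> set X1" "b \<notin> set X1" "b \<notin> set X2" "a \<notin> set X2" "a \<notin> set X3" "b \<notin> set X3"
begin

lemmas sI = spl_I[OF _ d(1,2,3)]

lemma fwI1: "a < hd (X2 @ [b]) \<Longrightarrow> fw a b (X1 @ a # X2 @ b # X3) = X1 @ a # X2 @ b # X3"
  using ab unfolding fw_def sI[OF less_imp_neq[OF ab]] Let_def by (cases X2) auto

lemma fwI2: "X2 \<noteq> [] \<Longrightarrow> hd X2 < a \<Longrightarrow> last X1 < a \<Longrightarrow> fw a b (X1 @ a # X2 @ b # X3) = X1 @ b # X2 @ a # X3"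
  using ab d unfolding fw_def sI[OF less_imp_neq[OF ab]] Let_def by (auto simp: spl_app swp_I)

lemma fwI3: "X2 \<noteq> [] \<Longrightarrow> hd X2 < a \<Longrightarrow> \<not> last X1 < a \<Longrightarrow> X3 = G @ V \<Longrightarrow> \<forall>x\<in>set G. b < x \<Longrightarrow>
   V \<noteq> [] \<Longrightarrow> \<not> b < hd V \<Longrightarrow> fw a b (X1 @ a # X2 @ b # X3) = X1 @ a # G @ X2 @ b # V"
  using ab d tw_split[of G "\<lambda>x. b < x" V] unfolding fw_def sI[OF less_imp_neq[OF ab]] Let_def by (auto simp: spl_app)

lemma fwI4: "X2 \<noteq> [] \<Longrightarrow> hd X2 < a \<Longrightarrow> \<not> last X1 < a \<Longrightarrow> \<forall>x\<in>set X3. b < x \<Longrightarrow>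
   fw a b (X1 @ a # X2 @ b # X3) = X1 @ a # b # X2 @ X3"
  using ab d tw_split[of X3 "\<lambda>x. b < x" "[]"] unfolding fw_def sI[OF less_imp_neq[OF ab]] Let_def by (auto simp: spl_app)

lemma bwI1: "X3 \<noteq> [] \<Longrightarrow> b < hd X3 \<Longrightarrow> bw a b (X1 @ a # X2 @ b # X3) = X1 @ a # X2 @ b # X3"
  using ab unfolding bw_def sI[OF less_imp_neq[OF ab]] Let_def by auto

lemma bwI2: "\<not> (X3 \<noteq> [] \<and> b < hd X3) \<Longrightarrow> X2 = [] \<Longrightarrow> X3 = V @ G \<Longrightarrow> \<forall>x\<in>set G. b < x \<Longrightarrow>
   (V = [] \<or> \<not> b < last V) \<Longrightarrow> last X1 < a \<Longrightarrow> bw a b (X1 @ a # X2 @ b # X3) = X1 @ b # G @ V @ [a]"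
  using ab d tw_rsplit[of G "\<lambda>x. b < x" V] spl_app[of b "[]" X3]
  unfolding bw_def sI[OF less_imp_neq[OF ab]] Let_def by auto

lemma bwI3: "\<not> (X3 \<noteq> [] \<and> b < hd X3) \<Longrightarrow> X2 = [] \<Longrightarrow> X3 = V @ G \<Longrightarrow> \<forall>x\<in>set G. b < x \<Longrightarrow>
   (V = [] \<or> \<not> b < last V) \<Longrightarrow> \<not> last X1 < a \<Longrightarrow> bw a b (X1 @ a # X2 @ b # X3) = X1 @ a # V @ b # G"
  using ab d tw_rsplit[of G "\<lambda>x. b < x" V] spl_app[of b "[]" X3]
  unfolding bw_def sI[OF less_imp_neq[OF ab]] Let_def by auto

lemma bwI4: "\<not> (X3 \<noteq> [] \<and> b < hd X3) \<Longrightarrow> X2 \<noteq> [] \<Longrightarrow> last X1 < a \<Longrightarrow>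
   bw a b (X1 @ a # X2 @ b # X3) = X1 @ b # X2 @ a # X3"
  using ab d spl_app[of b X2 X3]
  unfolding bw_def sI[OF less_imp_neq[OF ab]] Let_def by (auto simp: swp_I)

lemma bwI5: "\<not> (X3 \<noteq> [] \<and> b < hd X3) \<Longrightarrow> X2 \<noteq> [] \<Longrightarrow> \<not> last X1 < a \<Longrightarrow> X2 = G @ Y \<Longrightarrow>
   \<forall>x\<in>set G. b < x \<Longrightarrow> (Y = [] \<or> \<not> b < hd Y) \<Longrightarrow>
   bw a b (X1 @ a # X2 @ b # X3) = X1 @ a # Y @ b # G @ X3"
  using ab d spl_app[of b X2 X3] tw_split[of G "\<lambda>x. b < x" Y]
  unfolding bw_def sI[OF less_imp_neq[OF ab]] Let_def by auto

end

lemma spl_II: assumes "a \<noteq> b" "a \<notin> set X1" "b \<notin> set X1" "a \<notin> set X2"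
  shows "spl a (X1 @ b # X2 @ a # X3) = (X1 @ b # X2, X3)"
        "spl b (X1 @ b # X2 @ a # X3) = (X1, X2 @ a # X3)"
  using assms spl_app[of a "X1 @ b # X2" X3] spl_app[of b X1 "X2 @ a # X3"] by auto

context
  fixes a b :: nat and X1 X2 X3 :: "nat list"
  assumes ab: "a < b" and d: "a \<notin> set X1" "b \<notin> set X1" "b \<notin> set X2" "a \<notin> set X2" "a \<notin> set X3" "b \<notin> set X3"
begin

lemmas sII = spl_II[OF less_imp_neq[OF ab] d(1,2,4)]

lemma fwII1: "X3 \<noteq> [] \<Longrightarrow> a < hd X3 \<Longrightarrow> fw a b (X1 @ b # X2 @ a # X3) = X1 @ b # X2 @ a # X3"
  using ab unfolding fw_def sII Let_def by auto

lemma fwII2: "X3 \<noteq> [] \<Longrightarrow> \<not> a < hd X3 \<Longrightarrow> last (X1 @ b # X2) < a \<Longrightarrow>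
   fw a b (X1 @ b # X2 @ a # X3) = X1 @ a # X2 @ b # X3"
  using ab d unfolding fw_def sII Let_def
  by (auto simp: spl_app swp_II)

lemma fwII3: "X3 = [] \<Longrightarrow> last (X1 @ b # X2) < a \<Longrightarrow> X2 = G @ V \<Longrightarrow> \<forall>x\<in>set G. b < x \<Longrightarrow>
   (V = [] \<or> \<not> b < hd V) \<Longrightarrow> fw a b (X1 @ b # X2 @ a # X3) = X1 @ a # b # V @ G"
  using ab d tw_split[of G "\<lambda>x. b < x" V] spl_app[of a X2 X3] unfolding fw_def sII Let_def by auto

lemma fwII4: "\<not> (X3 \<noteq> [] \<and> a < hd X3) \<Longrightarrow> \<not> last (X1 @ b # X2) < a \<Longrightarrow> X2 = G @ V \<Longrightarrow> \<forall>x\<in>set G. b < x \<Longrightarrow>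
   (V = [] \<or> \<not> b < hd V) \<Longrightarrow> fw a b (X1 @ b # X2 @ a # X3) = X1 @ b # V @ a # G @ X3"
  using ab d tw_split[of G "\<lambda>x. b < x" V] spl_app[of a X2 X3] unfolding fw_def sII Let_def by auto

lemma bwII1: "b < hd (X2 @ [a]) \<Longrightarrow> bw a b (X1 @ b # X2 @ a # X3) = X1 @ b # X2 @ a # X3"
  using ab unfolding bw_def sII Let_def by (cases X2) auto

lemma bwII2: "\<not> b < hd (X2 @ [a]) \<Longrightarrow> last (X1 @ b # X2) < a \<Longrightarrow>
   bw a b (X1 @ b # X2 @ a # X3) = X1 @ a # X2 @ b # X3"
  using ab d swp_II[OF less_imp_neq[OF ab] d(1,2,4,3,5,6)] unfolding bw_def sII Let_def
  by (cases X2) auto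

lemma bwII3: "\<not> b < hd (X2 @ [a]) \<Longrightarrow> \<not> last (X1 @ b # X2) < a \<Longrightarrow> X3 = G @ R \<Longrightarrow> \<forall>x\<in>set G. b < x \<Longrightarrow>
   (R = [] \<or> \<not> b < hd R) \<Longrightarrow> bw a b (X1 @ b # X2 @ a # X3) = X1 @ b # G @ X2 @ a # R"
  using ab d tw_split[of G "\<lambda>x. b < x" R] spl_app[of a X2 X3] unfolding bw_def sII Let_def by (cases X2) auto

end

lemma order_cases:
  assumes "a \<in> set w" "b \<in> set w" "a \<noteq> b"
  obtains X1 X2 X3 where "w = X1 @ a # X2 @ b # X3" | X1 X2 X3 where "w = X1 @ b # X2 @ a # X3"
proof -
  obtain P Q where w: "w = P @ a # Q" using split_list[OF assms(1)] by blast
  show thesis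
  proof (cases "b \<in> set Q")
    case True
    then obtain Q1 Q2 where "Q = Q1 @ b # Q2" using split_list by metis
    then show thesis using that(1) w by auto
  next
    case False
    then have "b \<in> set P" using assms w by auto
    then obtain P1 P2 where "P = P1 @ b # P2" using split_list by metis
    then show thesis using that(2) w by auto
  qed
qed

lemma okp_lt: "x < y \<Longrightarrow> okp k x y" by (simp add: okp_def)
lemma okp_desc: "odd y \<Longrightarrow> topk k x \<Longrightarrow> okp k x y" by (simp add: okp_def)
lemma okp_D: "okp k x y \<Longrightarrow> y < x \<Longrightarrow> odd y \<and> topk k x" by (auto simp: okp_def)

locale pk =
  fixes k a b :: nat
  assumes k1: "1 \<le> k" and a_def: "a = 2*k - 1" and b_def: "b = 2*k"
begin

lemma ab: "a < b" "b = Suc a" "odd a" "even b" using k1 by (auto simp: a_def b_def)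

lemma topk_tr: "x \<noteq> a \<Longrightarrow> x \<noteq> b \<Longrightarrow> topk (k-1) x = topk k x"
  using k1 unfolding topk_def a_def b_def by (cases "even x") (auto elim!: evenE oddE)

lemma okp_tr: "x \<noteq> a \<Longrightarrow> x \<noteq> b \<Longrightarrow> okp (k-1) x y = okp k x y"
  using topk_tr by (simp add: okp_def)

lemma succ_tr: "a \<notin> set xs \<Longrightarrow> b \<notin> set xs \<Longrightarrow> successively (okp (k-1)) xs = successively (okp k) xs"
proof -
  assume h: "a \<notin> set xs" "b \<notin> set xs"
  show ?thesis by (rule successively_cong) (use h okp_tr in metis)+
qed

lemma topk_b: "topk k b" "\<not> topk (k-1) b" and topk_a: "topk (k-1) a" "\<not> topk k a"
  using k1 unfolding topk_def a_def b_def by auto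

lemma big_topk: "b < x \<Longrightarrow> topk (k-1) x \<Longrightarrow> odd x \<and> topk k x"
  using k1 unfolding topk_def a_def b_def by auto

lemma b_next: "okp (k-1) b y \<Longrightarrow> b < y"
  using topk_b ab by (auto simp: okp_def)
lemma b_prev: "okp j x b \<Longrightarrow> x < b"
  using ab by (auto simp: okp_def)
lemma a_next: "okp k a y \<Longrightarrow> a < y"
  using topk_a ab by (auto simp: okp_def)
lemma lt_a: "x < b \<Longrightarrow> x \<noteq> a \<Longrightarrow> x < a" using ab by auto
lemma gt_a: "a < x \<Longrightarrow> x \<noteq> b \<Longrightarrow> b < x" using ab by auto

end

lemma CCI: "mset v = mset w \<Longrightarrow> w \<in> CC n j \<Longrightarrow> v \<noteq> [] \<Longrightarrow> hd v = 0 \<Longrightarrow> successively (okp k) v \<Longrightarrow>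
   odd (last v) \<Longrightarrow> 2*k < last v \<Longrightarrow> v \<in> CC n k"
  unfolding CC_def using mset_eq_imp_distinct_iff[of v w] mset_eq_setD[of v w] by auto

context pk begin

lemma last_big: "odd x \<Longrightarrow> 2*(k-1) < x \<Longrightarrow> x \<noteq> a \<Longrightarrow> 2*k < x"
  using k1 a_def by (cases k) (auto elim!: oddE)

lemma fw_I:
  assumes w: "w \<in> CC n (k-1)" and wd: "w = X1 @ a # X2 @ b # X3"
  shows "fw a b w \<in> CC n k \<and> dc (fw a b w) = dc w \<and> bw a b (fw a b w) = w"
proof -
  have dist: "distinct w" and hw: "hd w = 0" and S: "successively (okp (k-1)) w"
    and lw: "odd (last w)" "2*(k-1) < last w" using w unfolding CC_def by auto
  have nd: "a \<notin> set X1" "b \<notin> set X1" "b \<notin> set X2" "a \<notin> set X2" "a \<notin> set X3" "b \<notin> set X3"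
    using dist ab unfolding wd by auto
  have X1ne: "X1 \<noteq> []" using hw ab unfolding wd by (cases X1) auto
  have hX1: "hd X1 = 0" using hw X1ne unfolding wd by simp
  have X3ne: "X3 \<noteq> []" using lw ab unfolding wd by auto
  have lastw: "last w = last X3" using X3ne wd by simp
  have s1: "successively (okp (k-1)) X1" and s2: "successively (okp (k-1)) X2"
    and s3: "successively (okp (k-1)) X3" and p1: "okp (k-1) (last X1) a"
    and p2: "okp (k-1) a (hd (X2 @ [b]))" and p3: "okp (k-1) (last (a # X2)) b"
    and p4: "okp (k-1) b (hd X3)"
    using S X1ne X3ne unfolding wd
    by (auto simp: successively_append_iff successively_Cons split: if_splits) (cases X2; simp)+
  have t1: "successively (okp k) X1" "successively (okp k) X2" "successively (okp k) X3"
    using s1 s2 s3 nd succ_tr by auto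
  have hX3: "b < hd X3" using p4 b_next by blast
  have lX2: "last (a # X2) < b" using p3 b_prev by blast
  have q1: "okp k (last X1) a" using p1 okp_tr nd X1ne by (metis last_in_set)
  have lastX3: "odd (last X3)" "2*k < last X3" using lw lastw last_big nd X3ne by (auto, metis last_in_set)
  note ss = successively_append_iff successively_Cons
  show ?thesis
  proof (cases "a < hd (X2 @ [b])")
    case True
    have fe: "fw a b w = w" using fwI1[OF ab(1) nd True] wd by simp
    have l2: "X2 \<noteq> [] \<Longrightarrow> last X2 < b" using lX2 by auto
    have tt: "a < hd (X2 @ b # X3)" using True by (cases X2) auto
    have "successively (okp k) w" unfolding wd using t1 q1 tt l2 hX3 X1ne X3ne ab
      by (auto simp: ss intro!: okp_lt)
    then have "w \<in> CC n k" using CCI[of w w n "k-1" k] w hX1 X1ne lastX3 lastw wd X3ne by auto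
    moreover have "bw a b w = w" using bwI1[OF ab(1) nd X3ne hX3] wd by simp
    ultimately show ?thesis using fe by simp
  next
    case False
    have X2ne: "X2 \<noteq> []" using False ab by auto
    have hX2: "hd X2 < a" using False X2ne nd by (cases X2) auto
    have ohX2: "odd (hd X2)" using okp_D[OF p2] hX2 X2ne by auto
    have lX2': "last X2 < a" using lX2 X2ne nd lt_a by (metis last_ConsR last_in_set)
    show ?thesis
    proof (cases "last X1 < a")
      case True
      have fe: "fw a b w = X1 @ b # X2 @ a # X3" using fwI2[OF ab(1) nd X2ne hX2 True] wd by simp
      have "successively (okp k) (X1 @ b # X2 @ a # X3)" using t1 True lX2' hX3 X1ne X3ne X2ne ohX2 hX2 ab topk_b
        by (auto simp: ss okp_def)
      then have "X1 @ b # X2 @ a # X3 \<in> CC n k" using CCI[of "X1 @ b # X2 @ a # X3" w n "k-1" k] w hX1 X1ne lastX3 lastw wd X3ne by auto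
      moreover have "bw a b (X1 @ b # X2 @ a # X3) = w"
        using bwII2[OF ab(1) nd] hX2 ab lX2' X2ne wd by simp
      moreover have "dc (X1 @ b # X2 @ a # X3) = dc w" unfolding wd using True lX2' hX3 X1ne X3ne X2ne hX2 ab
        by (simp add: dc_append dc_Cons)
      ultimately show ?thesis using fe by simp
    next
      case nlt: False
      define G where "G = takeWhile (\<lambda>x. b < x) X3"
      define V where "V = dropWhile (\<lambda>x. b < x) X3"
      have X3GV: "X3 = G @ V" unfolding G_def V_def by simp
      have Gb: "\<forall>x\<in>set G. b < x" unfolding G_def by (auto dest: set_takeWhileD)
      have Gne: "G \<noteq> []" using hX3 X3ne unfolding G_def by (cases X3) auto
      have sG: "successively (okp k) G" and sV: "successively (okp k) V"
        using t1(3) X3GV by (auto simp: successively_append_iff)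
      have ndGV: "a \<notin> set G" "b \<notin> set G" "a \<notin> set V" "b \<notin> set V" using nd X3GV by auto
      show ?thesis
      proof (cases "V = []")
        case Vne: False
        have hV: "hd V < b" using hd_dropWhile[of "\<lambda>x. b < x" X3] Vne ndGV(4) unfolding V_def
          by (metis hd_in_set linorder_neqE_nat)
        have pGV: "okp (k-1) (last G) (hd V)" using s3 X3GV Gne Vne by (auto simp: ss)
        have lGb: "b < last G" using Gb Gne by auto
        have hGb: "b < hd G" using Gb Gne by auto
        have oV: "odd (hd V)" and tG: "topk k (last G)"
          using okp_D[OF pGV] hV lGb big_topk by auto
        have fe: "fw a b w = X1 @ a # G @ X2 @ b # V" using fwI3[OF ab(1) nd X2ne hX2 nlt X3GV Gb Vne] hV wd by simp
        have "successively (okp k) (X1 @ a # G @ X2 @ b # V)" using t1 sG sV q1 lX2' hX2 X1ne Gne Vne X2ne ohX2 ab topk_b oV tG hGb hV lX2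
          by (auto simp: ss okp_def)
        moreover have "last V = last X3" using X3GV Vne by simp
        ultimately have "X1 @ a # G @ X2 @ b # V \<in> CC n k" using CCI[of "X1 @ a # G @ X2 @ b # V" w n "k-1" k] w hX1 X1ne lastX3 lastw wd X3GV Vne by auto
        moreover have "bw a b (X1 @ a # G @ X2 @ b # V) = w"
          using bwI5[OF ab(1), of X1 "G @ X2" V G X2] nd ndGV hV X2ne nlt Gb hX2 ab wd X3GV by auto
        moreover have "dc (X1 @ a # G @ X2 @ b # V) = dc w" unfolding wd X3GV using nlt lX2' hV X1ne Gne Vne X2ne hX2 ab lGb hGb nd
          by (simp add: dc_append dc_Cons)
        ultimately show ?thesis using fe by simp
      next
        case Ve: True
        have X3G: "X3 = G" using X3GV Ve by simp
        have fe: "fw a b w = X1 @ a # b # X2 @ X3" using fwI4[OF ab(1) nd X2ne hX2 nlt] Gb X3G wd by simp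
        have "successively (okp k) (X1 @ a # b # X2 @ X3)" using t1 q1 lX2' hX2 X1ne X3ne X2ne ohX2 ab topk_b hX3 lX2
          by (auto simp: ss okp_def)
        then have "X1 @ a # b # X2 @ X3 \<in> CC n k" using CCI[of "X1 @ a # b # X2 @ X3" w n "k-1" k] w hX1 X1ne lastX3 lastw wd X3ne by auto
        moreover have "bw a b (X1 @ a # b # X2 @ X3) = w"
          using bwI3[OF ab(1), of X1 "[]" "X2 @ X3" X2 X3] nd hX2 ab nlt Gb X3G lX2' wd X2ne by auto
        moreover have "dc (X1 @ a # b # X2 @ X3) = dc w" unfolding wd using nlt lX2' hX3 X1ne X3ne X2ne hX2 ab nd
          by (simp add: dc_append dc_Cons)
        ultimately show ?thesis using fe by simp
      qed
    qed
  qed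
qed

lemma fw_II:
  assumes w: "w \<in> CC n (k-1)" and wd: "w = X1 @ b # X2 @ a # X3"
  shows "fw a b w \<in> CC n k \<and> dc (fw a b w) = dc w \<and> bw a b (fw a b w) = w"
proof -
  have dist: "distinct w" and hw: "hd w = 0" and S: "successively (okp (k-1)) w"
    and lw: "odd (last w)" "2*(k-1) < last w" using w unfolding CC_def by auto
  have nd: "a \<notin> set X1" "b \<notin> set X1" "b \<notin> set X2" "a \<notin> set X2" "a \<notin> set X3" "b \<notin> set X3"
    using dist ab unfolding wd by auto
  have X1ne: "X1 \<noteq> []" using hw ab unfolding wd by (cases X1) auto
  have hX1: "hd X1 = 0" using hw X1ne unfolding wd by simp
  have s1: "successively (okp (k-1)) X1" and s2: "successively (okp (k-1)) X2"
    and s3: "successively (okp (k-1)) X3" and p1: "okp (k-1) (last X1) b"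
    and p2: "okp (k-1) b (hd (X2 @ [a]))" and p3: "okp (k-1) (last (b # X2)) a"
    and p4: "X3 \<noteq> [] \<Longrightarrow> okp (k-1) a (hd X3)"
  proof -
    have A: "successively (okp (k-1)) X1 \<and> okp (k-1) (last X1) b \<and> successively (okp (k-1)) (b # X2 @ a # X3)"
      using S X1ne unfolding wd by (simp add: successively_append_iff)
    then have B: "okp (k-1) b (hd (X2 @ [a])) \<and> successively (okp (k-1)) (X2 @ a # X3)"
      by (cases X2) (simp_all add: successively_Cons)
    then have C: "successively (okp (k-1)) X2 \<and> (X2 \<noteq> [] \<longrightarrow> okp (k-1) (last X2) a) \<and> successively (okp (k-1)) (a # X3)"
      by (auto simp add: successively_append_iff)
    then have D: "(X3 \<noteq> [] \<longrightarrow> okp (k-1) a (hd X3)) \<and> successively (okp (k-1)) X3"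
      by (cases X3) (simp_all add: successively_Cons)
    show "successively (okp (k-1)) X1" "successively (okp (k-1)) X2" "successively (okp (k-1)) X3"
      "okp (k-1) (last X1) b" "okp (k-1) b (hd (X2 @ [a]))" "X3 \<noteq> [] \<Longrightarrow> okp (k-1) a (hd X3)"
      using A B C D by auto
    show "okp (k-1) (last (b # X2)) a" using A B C by (cases "X2 = []") (auto simp: successively_Cons)
  qed
  have t1: "successively (okp k) X1" "successively (okp k) X2" "successively (okp k) X3"
    using s1 s2 s3 nd succ_tr by auto
  have lX1: "last X1 < a"
  proof -
    have "last X1 \<noteq> a" using nd X1ne last_in_set by metis
    then show ?thesis using p1 b_prev lt_a by blast
  qed
  have bX2: "b < hd (X2 @ [a])" using p2 b_next by blast
  have X2ne: "X2 \<noteq> []" using bX2 ab by auto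
  have hX2: "b < hd X2" using bX2 X2ne by simp
  have p3': "okp (k-1) (last X2) a" using p3 X2ne by simp
  have lX2na: "last X2 \<noteq> a" "last X2 \<noteq> b" using nd X2ne by (metis last_in_set)+
  have lastX3: "X3 \<noteq> [] \<Longrightarrow> odd (last X3) \<and> 2*k < last X3"
  proof -
    assume X3n: "X3 \<noteq> []"
    then have "last w = last X3" using wd by simp
    moreover have "last X3 \<noteq> a" using nd X3n last_in_set by metis
    ultimately show ?thesis using lw last_big by auto
  qed
  have lastw: "X3 \<noteq> [] \<Longrightarrow> last w = last X3" using wd by simp
  note ss = successively_append_iff successively_Cons
  show ?thesis
  proof (cases "X3 \<noteq> [] \<and> a < hd X3")
    case True
    have fe: "fw a b w = w" using fwII1[OF ab(1) nd] True wd by simp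
    have q3: "okp k (last X2) a" using p3' okp_tr lX2na by blast
    have "successively (okp k) w" unfolding wd using t1 lX1 hX2 q3 True X1ne X2ne ab
      by (auto simp: ss intro!: okp_lt)
    then have "w \<in> CC n k" using CCI[of w w n "k-1" k] w hX1 X1ne lastX3 lastw wd True by auto
    moreover have "bw a b w = w" using bwII1[OF ab(1) nd] bX2 wd by simp
    ultimately show ?thesis using fe by simp
  next
    case False
    have hX3: "X3 \<noteq> [] \<Longrightarrow> hd X3 < a" using False nd by (cases X3) auto
    have ohX3: "X3 \<noteq> [] \<Longrightarrow> odd (hd X3)" using okp_D[OF p4] hX3 by blast
    define G where "G = takeWhile (\<lambda>x. b < x) X2"
    define V where "V = dropWhile (\<lambda>x. b < x) X2"
    have X2GV: "X2 = G @ V" unfolding G_def V_def by simp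
    have Gb: "\<forall>x\<in>set G. b < x" unfolding G_def by (auto dest: set_takeWhileD)
    have Gne: "G \<noteq> []" using hX2 X2ne unfolding G_def by (cases X2) auto
    have sG: "successively (okp k) G" and sV: "successively (okp k) V"
      using t1(2) X2GV by (auto simp: successively_append_iff)
    have ndGV: "a \<notin> set G" "b \<notin> set G" "a \<notin> set V" "b \<notin> set V" using nd X2GV by auto
    have lGb: "b < last G" and hGb: "b < hd G" using Gb Gne by auto
    have hV: "V \<noteq> [] \<Longrightarrow> hd V < b" using hd_dropWhile[of "\<lambda>x. b < x" X2] ndGV(4) unfolding V_def
      by (metis hd_in_set linorder_neqE_nat)
    have pGV: "V \<noteq> [] \<Longrightarrow> okp (k-1) (last G) (hd V)" using s2 X2GV Gne by (auto simp: ss)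
    have oV: "V \<noteq> [] \<Longrightarrow> odd (hd V)" and tG: "V \<noteq> [] \<Longrightarrow> topk k (last G)"
      using okp_D[OF pGV] hV lGb big_topk by auto
    have GVb: "V = [] \<or> \<not> b < hd V" using hV by auto
    show ?thesis
    proof (cases "last X2 < a")
      case True
      have lXb: "last (X1 @ b # X2) < a" using True X2ne by simp
      show ?thesis
      proof (cases "X3 = []")
        case X3n: False
        have fe: "fw a b w = X1 @ a # X2 @ b # X3" using fwII2[OF ab(1) nd X3n _ lXb] hX3 X3n wd by simp
        have "successively (okp k) (X1 @ a # X2 @ b # X3)" using t1 lX1 hX2 True X1ne X2ne X3n hX3 ohX3 ab topk_b
          by (auto simp: ss okp_def)
        then have "X1 @ a # X2 @ b # X3 \<in> CC n k" using CCI[of "X1 @ a # X2 @ b # X3" w n "k-1" k] w hX1 X1ne lastX3 X3n wd by auto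
        moreover have "bw a b (X1 @ a # X2 @ b # X3) = w"
          using bwI4[OF ab(1) nd] hX3 X3n ab X2ne lX1 wd by simp
        moreover have "dc (X1 @ a # X2 @ b # X3) = dc w" unfolding wd using True lX1 hX3 X1ne X3n X2ne hX2 ab
          by (simp add: dc_append dc_Cons)
        ultimately show ?thesis using fe by simp
      next
        case X3e: True
        have Vne: "V \<noteq> []"
        proof
          assume "V = []"
          then have "last X2 \<in> set G" using X2GV Gne by simp
          then show False using Gb True ab by auto
        qed
        have lVX2: "last V = last X2" using X2GV Vne by simp
        have fe: "fw a b w = X1 @ a # b # V @ G" using fwII3[OF ab(1) nd X3e lXb X2GV Gb GVb] wd by simp
        have tGk: "odd (last G) \<and> 2*k < last G" using tG[OF Vne] lGb unfolding topk_def b_def by auto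
        have "successively (okp k) (X1 @ a # b # V @ G)" using t1 sG sV lX1 hV oV Vne Gne lVX2 True hGb ab topk_b
          by (auto simp: ss okp_def)
        moreover have "mset (X1 @ a # b # V @ G) = mset w" using wd X2GV X3e by simp
        ultimately have "X1 @ a # b # V @ G \<in> CC n k" using CCI[of "X1 @ a # b # V @ G" w n "k-1" k] w hX1 X1ne tGk Gne by simp
        moreover have "bw a b (X1 @ a # [] @ b # V @ G) = X1 @ b # G @ V @ [a]"
          by (rule bwI2[OF ab(1)]) (use nd ndGV hV Vne Gb lVX2 True ab lX1 in auto)
        then have "bw a b (X1 @ a # b # V @ G) = w" using wd X3e X2GV by simp
        moreover have "dc (X1 @ a # b # V @ G) = dc w" unfolding wd X2GV X3e using lX1 hV Vne Gne lVX2 True ab lGb hGb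
          by (simp add: dc_append dc_Cons)
        ultimately show ?thesis using fe by simp
      qed
    next
      case nlt: False
      have lXa: "a < last X2" using nlt lX2na by auto
      have tX2: "topk k (last X2)" using okp_D[OF p3' lXa] topk_tr lX2na by auto
      have tG': "topk k (last G)" using tX2 tG X2GV by (cases "V = []") auto
      have lXb: "\<not> last (X1 @ b # X2) < a" using nlt X2ne by simp
      have fe: "fw a b w = X1 @ b # V @ a # G @ X3" using fwII4[OF ab(1) nd False lXb X2GV Gb GVb] wd by simp
      have lV: "V \<noteq> [] \<Longrightarrow> last V = last X2" using X2GV by simp
      have "successively (okp k) (X1 @ b # V @ a # G @ X3)" using t1 sG sV lX1 hV oV lV lXa tX2 tG' Gne hGb hX3 ohX3 ab topk_b
        by (cases "V = []"; cases "X3 = []") (auto simp: ss okp_def)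
      moreover have "odd (last (X1 @ b # V @ a # G @ X3)) \<and> 2*k < last (X1 @ b # V @ a # G @ X3)"
        using lastX3 tG' lGb Gne unfolding topk_def b_def by (cases "X3 = []") auto
      moreover have "mset (X1 @ b # V @ a # G @ X3) = mset w" using wd X2GV by simp
      ultimately have "X1 @ b # V @ a # G @ X3 \<in> CC n k" using CCI[of "X1 @ b # V @ a # G @ X3" w n "k-1" k] w hX1 X1ne by simp
      moreover have "bw a b (X1 @ b # V @ a # G @ X3) = X1 @ b # G @ V @ a # X3"
      proof -
        have c1: "\<not> b < hd (V @ [a])" using hV ab by (cases "V = []") auto
        have c2: "\<not> last (X1 @ b # V) < a" using lV lXa ab by (cases "V = []") auto
        show ?thesis by (rule bwII3[OF ab(1)]) (use nd ndGV c1 c2 Gb hX3 ab in auto)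
      qed
      then have "bw a b (X1 @ b # V @ a # G @ X3) = w" using wd X2GV by simp
      moreover have "dc (X1 @ b # V @ a # G @ X3) = dc w" unfolding wd X2GV using lX1 hV lV lXa Gne ab lGb hGb hX3
        by (cases "V = []"; cases "X3 = []") (simp_all add: dc_append dc_Cons)
      ultimately show ?thesis using fe by simp
    qed
  qed
qed

end

lemma rsplit_facts:
  fixes P :: "'a \<Rightarrow> bool" and X :: "'a list"
  defines "G \<equiv> rev (takeWhile P (rev X))" and "V \<equiv> rev (dropWhile P (rev X))"
  shows "X = V @ G" "\<forall>x\<in>set G. P x" "V = [] \<or> \<not> P (last V)"
proof -
  have "rev X = takeWhile P (rev X) @ dropWhile P (rev X)" by simp
  then show "X = V @ G" unfolding G_def V_def by (metis rev_append rev_rev_ident)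
  show "\<forall>x\<in>set G. P x" unfolding G_def by (auto dest: set_takeWhileD)
  show "V = [] \<or> \<not> P (last V)"
  proof (cases "dropWhile P (rev X) = []")
    case True then show ?thesis unfolding V_def by simp
  next
    case False
    then have "\<not> P (hd (dropWhile P (rev X)))" by (rule hd_dropWhile)
    moreover have "last V = hd (dropWhile P (rev X))" unfolding V_def using False by (simp add: last_rev)
    ultimately show ?thesis by simp
  qed
qed

lemma split_facts:
  fixes P :: "'a \<Rightarrow> bool" and X :: "'a list"
  defines "G \<equiv> takeWhile P X" and "V \<equiv> dropWhile P X"
  shows "X = G @ V" "\<forall>x\<in>set G. P x" "V = [] \<or> \<not> P (hd V)"
  unfolding G_def V_def using hd_dropWhile[of P X] by (auto dest: set_takeWhileD)

context pk begin

lemma bw_I: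
  assumes v: "v \<in> CC n k" and vd: "v = X1 @ a # X2 @ b # X3"
  shows "bw a b v \<in> CC n (k-1) \<and> fw a b (bw a b v) = v"
proof -
  have dist: "distinct v" and hv: "hd v = 0" and S: "successively (okp k) v"
    and lv: "odd (last v)" "2*k < last v" using v unfolding CC_def by auto
  have nd: "a \<notin> set X1" "b \<notin> set X1" "b \<notin> set X2" "a \<notin> set X2" "a \<notin> set X3" "b \<notin> set X3"
    using dist ab unfolding vd by auto
  have X1ne: "X1 \<noteq> []" using hv ab unfolding vd by (cases X1) auto
  have hX1: "hd X1 = 0" using hv X1ne unfolding vd by simp
  have X3ne: "X3 \<noteq> []" using lv ab unfolding vd by auto
  have lastv: "last v = last X3" using X3ne vd by simp
  have s1: "successively (okp k) X1" and s2: "successively (okp k) X2"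
    and s3: "successively (okp k) X3" and p1: "okp k (last X1) a"
    and p2: "okp k a (hd (X2 @ [b]))" and p3: "X2 \<noteq> [] \<Longrightarrow> okp k (last X2) b"
    and p4: "okp k b (hd X3)"
  proof -
    have A: "successively (okp k) X1 \<and> okp k (last X1) a \<and> successively (okp k) (a # X2 @ b # X3)"
      using S X1ne unfolding vd by (simp add: successively_append_iff)
    then have B: "okp k a (hd (X2 @ [b])) \<and> successively (okp k) (X2 @ b # X3)"
      by (cases X2) (simp_all add: successively_Cons)
    then have C: "successively (okp k) X2 \<and> (X2 \<noteq> [] \<longrightarrow> okp k (last X2) b) \<and> successively (okp k) (b # X3)"
      by (auto simp add: successively_append_iff)
    then have D: "okp k b (hd X3) \<and> successively (okp k) X3"
      using X3ne by (cases X3) (simp_all add: successively_Cons)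
    show "successively (okp k) X1" "successively (okp k) X2" "successively (okp k) X3"
      "okp k (last X1) a" "okp k a (hd (X2 @ [b]))" "X2 \<noteq> [] \<Longrightarrow> okp k (last X2) b" "okp k b (hd X3)"
      using A B C D by auto
  qed
  have t1: "successively (okp (k-1)) X1" "successively (okp (k-1)) X2" "successively (okp (k-1)) X3"
    using s1 s2 s3 nd succ_tr by auto
  have aX2: "a < hd (X2 @ [b])" using p2 a_next by blast
  have lX2: "X2 \<noteq> [] \<Longrightarrow> last X2 < b" using p3 b_prev by blast
  have lX1na: "last X1 \<noteq> a" "last X1 \<noteq> b" using nd X1ne last_in_set by metis+
  have q1: "okp (k-1) (last X1) a" using p1 okp_tr lX1na by blast
  have lastX3: "odd (last X3)" "2*(k-1) < last X3" using lv lastv by auto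
  note ss = successively_append_iff successively_Cons
  show ?thesis
  proof (cases "b < hd X3")
    case True
    have be: "bw a b v = v" using bwI1[OF ab(1) nd X3ne True] vd by simp
    have tt: "a < hd (X2 @ b # X3)" using aX2 by (cases X2) auto
    have "successively (okp (k-1)) v" unfolding vd using t1 q1 tt lX2 True X1ne X3ne ab
      by (auto simp: ss intro!: okp_lt)
    then have "v \<in> CC n (k-1)" using CCI[of v v n k "k-1"] v hX1 X1ne lastX3 lastv vd by auto
    moreover have "fw a b v = v" using fwI1[OF ab(1) nd aX2] vd by simp
    ultimately show ?thesis using be by simp
  next
    case False
    have hX3: "hd X3 < a" using False nd X3ne lt_a by (metis hd_in_set linorder_neqE_nat)
    have ohX3: "odd (hd X3)" using okp_D[OF p4] hX3 ab by auto
    show ?thesis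
    proof (cases "X2 = []")
      case X2e: True
      define G where "G = rev (takeWhile (\<lambda>x. b < x) (rev X3))"
      define V where "V = rev (dropWhile (\<lambda>x. b < x) (rev X3))"
      have X3VG: "X3 = V @ G" and Gb: "\<forall>x\<in>set G. b < x" and lVb: "V = [] \<or> \<not> b < last V"
        using rsplit_facts[where P="\<lambda>x. b < x" and X=X3] unfolding G_def V_def by auto
      have Gne: "G \<noteq> []" using lv lastv X3VG Gb b_def
      proof -
        have "last X3 \<in> set G \<or> G = []" using X3VG by auto
        show ?thesis
        proof
          assume "G = []"
          then have "V \<noteq> []" "last V = last X3" using X3VG X3ne by auto
          then show False using lVb lv lastv b_def by auto
        qed
      qed
      have Vne: "V \<noteq> []" using False X3VG Gb X3ne by (cases V) auto
      have hV: "hd V = hd X3" using X3VG Vne by simp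
      have ndGV: "a \<notin> set G" "b \<notin> set G" "a \<notin> set V" "b \<notin> set V" using nd X3VG by auto
      have lVa: "last V < a" using lVb Vne ndGV lt_a by (metis last_in_set linorder_neqE_nat)
      have lG: "last G = last X3" using X3VG Gne by simp
      have hGb: "b < hd G" and lGb: "b < last G" using Gb Gne by auto
      have sG: "successively (okp (k-1)) G" and sV: "successively (okp (k-1)) V"
        using t1(3) X3VG by (auto simp: successively_append_iff)
      have tGk: "topk (k-1) (last G)" using lastX3 lG unfolding topk_def by auto
      show ?thesis
      proof (cases "last X1 < a")
        case True
        have be: "bw a b v = X1 @ b # G @ V @ [a]"
          using bwI2[OF ab(1) nd _ X2e X3VG Gb lVb True] False X3ne vd by simp
        have "successively (okp (k-1)) (X1 @ b # G @ V @ [a])" using t1 sG sV True hGb Gne Vne hV hX3 ohX3 tGk lGb lVa ab X1ne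
          by (auto simp: ss okp_def)
        moreover have "mset (X1 @ b # G @ V @ [a]) = mset v" using vd X2e X3VG by simp
        moreover have "odd a" "2*(k-1) < a" using ab a_def k1 by auto
        ultimately have "X1 @ b # G @ V @ [a] \<in> CC n (k-1)" using CCI[of "X1 @ b # G @ V @ [a]" v n k "k-1"] v hX1 X1ne by simp
        moreover have "fw a b (X1 @ b # (G @ V) @ a # []) = X1 @ a # b # V @ G"
          by (rule fwII3[OF ab(1)]) (use nd ndGV True lVa Gb hV hX3 Vne ab in auto)
        ultimately show ?thesis using be vd X2e X3VG by simp
      next
        case nlt: False
        have be: "bw a b v = X1 @ a # V @ b # G"
          using bwI3[OF ab(1) nd _ X2e X3VG Gb lVb nlt] False X3ne vd by simp
        have "successively (okp (k-1)) (X1 @ a # V @ b # G)" using t1 sG sV q1 hGb Gne Vne hV hX3 ohX3 lVa ab X1ne topk_a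
          by (auto simp: ss okp_def)
        moreover have "mset (X1 @ a # V @ b # G) = mset v" using vd X2e X3VG by simp
        ultimately have "X1 @ a # V @ b # G \<in> CC n (k-1)" using CCI[of "X1 @ a # V @ b # G" v n k "k-1"] v hX1 X1ne lG lastX3 Gne by simp
        moreover have "fw a b (X1 @ a # V @ b # G) = X1 @ a # b # V @ G"
          by (rule fwI4[OF ab(1)]) (use nd ndGV nlt Gb hV hX3 Vne ab in auto)
        ultimately show ?thesis using be vd X2e X3VG by simp
      qed
    next
      case X2n: False
      have hX2: "b < hd X2" using aX2 X2n nd gt_a by (metis hd_append2 hd_in_set)
      have lX2a: "last X2 < a" using lX2 X2n nd lt_a by (metis last_in_set)
      show ?thesis
      proof (cases "last X1 < a")
        case True
        have be: "bw a b v = X1 @ b # X2 @ a # X3" using bwI4[OF ab(1) nd _ X2n True] False X3ne vd by simp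
        have "successively (okp (k-1)) (X1 @ b # X2 @ a # X3)" using t1 True hX2 X2n X3ne lX2a hX3 ohX3 ab X1ne topk_a
          by (auto simp: ss okp_def)
        moreover have "mset (X1 @ b # X2 @ a # X3) = mset v" using vd by simp
        ultimately have "X1 @ b # X2 @ a # X3 \<in> CC n (k-1)" using CCI[of "X1 @ b # X2 @ a # X3" v n k "k-1"] v hX1 X1ne lastX3 lastv vd X3ne by simp
        moreover have "fw a b (X1 @ b # X2 @ a # X3) = X1 @ a # X2 @ b # X3"
          by (rule fwII2[OF ab(1)]) (use nd True X2n X3ne hX3 lX2a in auto)
        ultimately show ?thesis using be vd by simp
      next
        case nlt: False
        define G where "G = takeWhile (\<lambda>x. b < x) X2"
        define Y where "Y = dropWhile (\<lambda>x. b < x) X2"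
        have X2GY: "X2 = G @ Y" and Gb: "\<forall>x\<in>set G. b < x" and hYb: "Y = [] \<or> \<not> b < hd Y"
          using split_facts[where P="\<lambda>x. b < x" and X=X2] unfolding G_def Y_def by auto
        have Gne: "G \<noteq> []" using hX2 X2n unfolding G_def by (cases X2) auto
        have Yne: "Y \<noteq> []"
        proof
          assume "Y = []"
          then have "last X2 \<in> set G" using X2GY X2n by simp
          then show False using Gb lX2a ab by auto
        qed
        have ndGY: "a \<notin> set G" "b \<notin> set G" "a \<notin> set Y" "b \<notin> set Y" using nd X2GY by auto
        have hYa: "hd Y < a" using hYb Yne ndGY lt_a by (metis hd_in_set linorder_neqE_nat)
        have lY: "last Y = last X2" using X2GY Yne by simp
        have hGb: "b < hd G" and lGb: "b < last G" using Gb Gne by auto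
        have sG: "successively (okp k) G" and sY: "successively (okp k) Y"
          and pGY: "okp k (last G) (hd Y)" using s2 X2GY Gne Yne by (auto simp: ss)
        have sG': "successively (okp (k-1)) G" and sY': "successively (okp (k-1)) Y"
          using sG sY ndGY succ_tr by auto
        have oY: "odd (hd Y)" and tG: "topk k (last G)" using okp_D[OF pGY] hYa lGb ab by auto
        have lGna: "last G \<noteq> a" "last G \<noteq> b" using lGb ab by auto
        have tG': "topk (k-1) (last G)" using tG topk_tr lGna by blast
        have be: "bw a b v = X1 @ a # Y @ b # G @ X3"
          using bwI5[OF ab(1) nd _ X2n nlt X2GY Gb hYb] False X3ne vd by simp
        have "successively (okp (k-1)) (X1 @ a # Y @ b # G @ X3)" using t1 sG' sY' q1 Yne Gne X3ne hYa oY lY lX2a hGb tG' hX3 ohX3 lGb topk_a ab X1ne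
          by (auto simp: ss okp_def)
        moreover have "mset (X1 @ a # Y @ b # G @ X3) = mset v" using vd X2GY by simp
        ultimately have "X1 @ a # Y @ b # G @ X3 \<in> CC n (k-1)" using CCI[of "X1 @ a # Y @ b # G @ X3" v n k "k-1"] v hX1 X1ne lastX3 lastv X3ne by simp
        moreover have "fw a b (X1 @ a # Y @ b # G @ X3) = X1 @ a # G @ Y @ b # X3"
          by (rule fwI3[OF ab(1)]) (use nd ndGY nlt Gb hYa Yne X3ne False ab in auto)
        ultimately show ?thesis using be vd X2GY by simp
      qed
    qed
  qed
qed

lemma bw_II:
  assumes v: "v \<in> CC n k" and vd: "v = X1 @ b # X2 @ a # X3"
  shows "bw a b v \<in> CC n (k-1) \<and> fw a b (bw a b v) = v"
proof -
  have dist: "distinct v" and hv: "hd v = 0" and S: "successively (okp k) v"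
    and lv: "odd (last v)" "2*k < last v" using v unfolding CC_def by auto
  have nd: "a \<notin> set X1" "b \<notin> set X1" "b \<notin> set X2" "a \<notin> set X2" "a \<notin> set X3" "b \<notin> set X3"
    using dist ab unfolding vd by auto
  have X1ne: "X1 \<noteq> []" using hv ab unfolding vd by (cases X1) auto
  have hX1: "hd X1 = 0" using hv X1ne unfolding vd by simp
  have X3ne: "X3 \<noteq> []" using lv ab a_def unfolding vd by auto
  have lastv: "last v = last X3" using X3ne vd by simp
  have s1: "successively (okp k) X1" and s2: "successively (okp k) X2"
    and s3: "successively (okp k) X3" and p1: "okp k (last X1) b"
    and p2: "okp k b (hd (X2 @ [a]))" and p3: "X2 \<noteq> [] \<Longrightarrow> okp k (last X2) a"
    and p4: "okp k a (hd X3)"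
  proof -
    have A: "successively (okp k) X1 \<and> okp k (last X1) b \<and> successively (okp k) (b # X2 @ a # X3)"
      using S X1ne unfolding vd by (simp add: successively_append_iff)
    then have B: "okp k b (hd (X2 @ [a])) \<and> successively (okp k) (X2 @ a # X3)"
      by (cases X2) (simp_all add: successively_Cons)
    then have C: "successively (okp k) X2 \<and> (X2 \<noteq> [] \<longrightarrow> okp k (last X2) a) \<and> successively (okp k) (a # X3)"
      by (auto simp add: successively_append_iff)
    then have D: "okp k a (hd X3) \<and> successively (okp k) X3"
      using X3ne by (cases X3) (simp_all add: successively_Cons)
    show "successively (okp k) X1" "successively (okp k) X2" "successively (okp k) X3"
      "okp k (last X1) b" "okp k b (hd (X2 @ [a]))" "X2 \<noteq> [] \<Longrightarrow> okp k (last X2) a" "okp k a (hd X3)"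
      using A B C D by auto
  qed
  have t1: "successively (okp (k-1)) X1" "successively (okp (k-1)) X2" "successively (okp (k-1)) X3"
    using s1 s2 s3 nd succ_tr by auto
  have lX1na: "last X1 \<noteq> a" "last X1 \<noteq> b" using nd X1ne last_in_set by metis+
  have lX1: "last X1 < a" using p1 b_prev lX1na lt_a by blast
  have hX3na: "hd X3 \<noteq> a" "hd X3 \<noteq> b" using nd X3ne hd_in_set by metis+
  have hX3: "b < hd X3" using p4 a_next hX3na gt_a by blast
  have lastX3: "odd (last X3)" "2*(k-1) < last X3" using lv lastv by auto
  note ss = successively_append_iff successively_Cons
  show ?thesis
  proof (cases "b < hd (X2 @ [a])")
    case True
    have be: "bw a b v = v" using bwII1[OF ab(1) nd True] vd by simp
    have X2n: "X2 \<noteq> []" using True ab by auto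
    have lX2na: "last X2 \<noteq> a" "last X2 \<noteq> b" using nd X2n last_in_set by metis+
    have q3: "okp (k-1) (last X2) a" using p3[OF X2n] okp_tr lX2na by blast
    have "successively (okp (k-1)) v" unfolding vd using t1 q3 True X2n lX1 hX3 X1ne X3ne ab
      by (auto simp: ss intro!: okp_lt)
    then have "v \<in> CC n (k-1)" using CCI[of v v n k "k-1"] v hX1 X1ne lastX3 lastv vd by auto
    moreover have "fw a b v = v" using fwII1[OF ab(1) nd X3ne] hX3 ab vd by simp
    ultimately show ?thesis using be by simp
  next
    case False
    have hX2: "X2 \<noteq> [] \<Longrightarrow> hd X2 < a" using False nd lt_a by (metis hd_append2 hd_in_set linorder_neqE_nat)
    have ohX2: "X2 \<noteq> [] \<Longrightarrow> odd (hd X2)" using okp_D[OF p2] hX2 ab by (metis hd_append2 less_trans)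
    show ?thesis
    proof (cases "last (X1 @ b # X2) < a")
      case True
      have X2n: "X2 \<noteq> []" using True ab by (cases X2) auto
      have lX2a: "last X2 < a" using True X2n by simp
      have be: "bw a b v = X1 @ a # X2 @ b # X3" using bwII2[OF ab(1) nd False True] vd by simp
      have "successively (okp (k-1)) (X1 @ a # X2 @ b # X3)" using t1 lX1 hX2 ohX2 X2n X3ne lX2a hX3 ab X1ne topk_a
        by (auto simp: ss okp_def)
      moreover have "mset (X1 @ a # X2 @ b # X3) = mset v" using vd by simp
      ultimately have "X1 @ a # X2 @ b # X3 \<in> CC n (k-1)" using CCI[of "X1 @ a # X2 @ b # X3" v n k "k-1"] v hX1 X1ne lastX3 lastv vd X3ne by simp
      moreover have "fw a b (X1 @ a # X2 @ b # X3) = X1 @ b # X2 @ a # X3"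
        by (rule fwI2[OF ab(1)]) (use nd X2n hX2 lX1 in auto)
      ultimately show ?thesis using be vd by simp
    next
      case nlt: False
      define G where "G = takeWhile (\<lambda>x. b < x) X3"
      define R where "R = dropWhile (\<lambda>x. b < x) X3"
      have X3GR: "X3 = G @ R" and Gb: "\<forall>x\<in>set G. b < x" and hRb: "R = [] \<or> \<not> b < hd R"
        using split_facts[where P="\<lambda>x. b < x" and X=X3] unfolding G_def R_def by auto
      have Gne: "G \<noteq> []" using hX3 X3ne unfolding G_def by (cases X3) auto
      have ndGR: "a \<notin> set G" "b \<notin> set G" "a \<notin> set R" "b \<notin> set R" using nd X3GR by auto
      have hRa: "R \<noteq> [] \<Longrightarrow> hd R < a" using hRb ndGR lt_a by (metis hd_in_set linorder_neqE_nat)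
      have hGb: "b < hd G" and lGb: "b < last G" using Gb Gne by auto
      have sG: "successively (okp k) G" and sR: "successively (okp k) R"
        and pGR: "R \<noteq> [] \<Longrightarrow> okp k (last G) (hd R)" using s3 X3GR Gne by (auto simp: ss)
      have sG': "successively (okp (k-1)) G" and sR': "successively (okp (k-1)) R"
        using sG sR ndGR succ_tr by auto
      have oR: "R \<noteq> [] \<Longrightarrow> odd (hd R)" using okp_D[OF pGR] hRa lGb ab by (meson less_trans)
      have lGna: "last G \<noteq> a" "last G \<noteq> b" using lGb ab by auto
      have tG': "topk (k-1) (last G)"
      proof (cases "R = []")
        case True
        then have "last G = last X3" using X3GR by simp
        then show ?thesis using lastX3 unfolding topk_def by auto
      next
        case Rn: False
        have "topk k (last G)" using okp_D[OF pGR[OF Rn]] hRa[OF Rn] lGb ab by auto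
        then show ?thesis using topk_tr lGna by blast
      qed
      have q3: "X2 \<noteq> [] \<Longrightarrow> okp (k-1) (last X2) a" using p3 okp_tr nd last_in_set by metis
      have be: "bw a b v = X1 @ b # G @ X2 @ a # R" using bwII3[OF ab(1) nd False nlt X3GR Gb hRb] vd by simp
      have "successively (okp (k-1)) (X1 @ b # G @ X2 @ a # R)" using t1 sG' sR' lX1 hGb Gne hX2 ohX2 tG' lGb q3 hRa oR topk_a ab X1ne
        by (cases "X2 = []"; cases "R = []") (auto simp: ss okp_def)
      moreover have "mset (X1 @ b # G @ X2 @ a # R) = mset v" using vd X3GR by simp
      moreover have "odd (last (X1 @ b # G @ X2 @ a # R)) \<and> 2*(k-1) < last (X1 @ b # G @ X2 @ a # R)"
      proof (cases "R = []")
        case True then show ?thesis using ab a_def k1 by simp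
      next
        case False
        then have "last R = last v" using vd X3GR by simp
        then show ?thesis using lv False by simp
      qed
      ultimately have "X1 @ b # G @ X2 @ a # R \<in> CC n (k-1)" using CCI[of "X1 @ b # G @ X2 @ a # R" v n k "k-1"] v hX1 X1ne by simp
      moreover have "fw a b (X1 @ b # (G @ X2) @ a # R) = X1 @ b # X2 @ a # G @ R"
      proof -
        have c1: "\<not> (R \<noteq> [] \<and> a < hd R)" using hRa by auto
        have c2: "\<not> last (X1 @ b # G @ X2) < a" using nlt lGb Gne ab by (cases "X2 = []") auto
        have c3: "X2 = [] \<or> \<not> b < hd X2" using hX2 ab by auto
        show ?thesis by (rule fwII4[OF ab(1)]) (use nd ndGR c1 c2 c3 Gb in auto)
      qed
      ultimately show ?thesis using be vd X3GR by simp
    qed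
  qed
qed

end

lemma step_bij:
  assumes k1: "1 \<le> k" and kn: "k \<le> n"
  shows "bij_betw (fw (2*k-1) (2*k)) (CC n (k-1)) (CC n k) \<and> (\<forall>w\<in>CC n (k-1). dc (fw (2*k-1) (2*k) w) = dc w)"
proof -
  interpret pk k "2*k-1" "2*k" by unfold_locales (use k1 in auto)
  have inset: "2*k-1 \<in> set w" "2*k \<in> set w" if "w \<in> CC n j" for w j
    using that k1 kn unfolding CC_def by auto
  have F: "fw (2*k-1) (2*k) w \<in> CC n k \<and> dc (fw (2*k-1) (2*k) w) = dc w \<and> bw (2*k-1) (2*k) (fw (2*k-1) (2*k) w) = w" if w: "w \<in> CC n (k-1)" for w
  proof -
    have "2*k-1 \<in> set w" "2*k \<in> set w" using inset[OF w] by auto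
    moreover have "2*k-1 \<noteq> 2*k" using k1 by auto
    ultimately show ?thesis
      by (rule order_cases) (erule fw_I[OF w], erule fw_II[OF w])
  qed
  have B: "bw (2*k-1) (2*k) v \<in> CC n (k-1) \<and> fw (2*k-1) (2*k) (bw (2*k-1) (2*k) v) = v" if v: "v \<in> CC n k" for v
  proof -
    have "2*k-1 \<in> set v" "2*k \<in> set v" using inset[OF v] by auto
    moreover have "2*k-1 \<noteq> 2*k" using k1 by auto
    ultimately show ?thesis
      by (rule order_cases) (erule bw_I[OF v], erule bw_II[OF v])
  qed
  have "bij_betw (fw (2*k-1) (2*k)) (CC n (k-1)) (CC n k)"
    by (rule bij_betw_byWitness[where f'="bw (2*k-1) (2*k)"]) (use F B in auto)
  then show ?thesis using F by auto
qed

fun FF :: "nat \<Rightarrow> nat list \<Rightarrow> nat list" where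
  "FF 0 = id"
| "FF (Suc k) = fw (2*Suc k - 1) (2*Suc k) \<circ> FF k"

lemma FF_bij: "k \<le> n \<Longrightarrow> bij_betw (FF k) (CC n 0) (CC n k) \<and> (\<forall>w\<in>CC n 0. dc (FF k w) = dc w)"
proof (induction k)
  case 0 then show ?case by (simp add: bij_betw_def)
next
  case (Suc k)
  then have IH: "bij_betw (FF k) (CC n 0) (CC n k)" "\<forall>w\<in>CC n 0. dc (FF k w) = dc w" by auto
  have S: "bij_betw (fw (2*Suc k-1) (2*Suc k)) (CC n k) (CC n (Suc k))"
    "\<forall>w\<in>CC n k. dc (fw (2*Suc k-1) (2*Suc k) w) = dc w"
    using step_bij[of "Suc k" n] Suc.prems by auto
  have "bij_betw (FF (Suc k)) (CC n 0) (CC n (Suc k))" using bij_betw_trans[OF IH(1) S(1)] by (simp only: FF.simps)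
  moreover have "\<forall>w\<in>CC n 0. dc (FF (Suc k) w) = dc w"
    using IH S bij_betwE[OF IH(1)] by auto
  ultimately show ?case by blast
qed

lemma W_in: assumes s: "\<sigma> \<in> Wstar_set n" shows "0 # \<sigma> \<in> CC n 0"
proof -
  have d: "distinct \<sigma>" and st: "set \<sigma> = {1..2*n+1}" and D: "\<forall>i\<in>descents \<sigma>. odd (\<sigma>!i) \<and> odd (\<sigma>!Suc i)"
    and l: "odd (last \<sigma>)" using s unfolding Wstar_set_def perms_def by auto
  have ne: "\<sigma> \<noteq> []" using st by auto
  have "successively (okp 0) \<sigma>"
    unfolding successively_conv_nth
  proof (intro allI impI)
    fix i assume i: "Suc i < length \<sigma>"
    have neq: "\<sigma>!i \<noteq> \<sigma>!Suc i" using d i by (simp add: nth_eq_iff_index_eq)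
    have "\<sigma>!i \<in> set \<sigma>" using i by simp
    then have pos: "0 < \<sigma>!i" using st by auto
    show "okp 0 (\<sigma>!i) (\<sigma>!Suc i)"
    proof (cases "\<sigma>!i < \<sigma>!Suc i")
      case True then show ?thesis by (simp add: okp_def)
    next
      case False
      then have "i \<in> descents \<sigma>" using neq i unfolding descents_def by auto
      then show ?thesis using D pos unfolding okp_def topk_def by auto
    qed
  qed
  moreover have "0 < hd \<sigma>" using st ne hd_in_set[OF ne] by auto
  ultimately have "successively (okp 0) (0 # \<sigma>)" using ne by (simp add: successively_Cons okp_def)
  moreover have "0 \<notin> set \<sigma>" using st by auto
  moreover have "set (0 # \<sigma>) = {0..2*n+1}" using st by auto
  moreover have "0 < last \<sigma>" using l by (cases "last \<sigma>") auto
  ultimately show ?thesis unfolding CC_def using d l ne by auto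
qed

lemma W_out: assumes v: "v \<in> CC n 0" shows "tl v \<in> Wstar_set n \<and> 0 # tl v = v"
proof -
  have d: "distinct v" and st: "set v = {0..2*n+1}" and ne: "v \<noteq> []" and h: "hd v = 0"
    and S: "successively (okp 0) v" and l: "odd (last v)" using v unfolding CC_def by auto
  have vv: "v = 0 # tl v" using ne h by (cases v) auto
  have d': "distinct (tl v)" and n0: "0 \<notin> set (tl v)" using d vv by (metis distinct.simps(2))+
  have "set v = insert 0 (set (tl v))" using vv by (metis list.set(2))
  then have "set (tl v) = set v - {0}" using n0 by auto
  then have st': "set (tl v) = {1..2*n+1}" using st by auto
  have ne': "tl v \<noteq> []" using st' by auto
  have "successively (okp 0) (0 # tl v)" using S vv by simp
  then have S': "successively (okp 0) (tl v)" by (auto simp: successively_Cons)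
  have D: "\<forall>i\<in>descents (tl v). odd (tl v!i) \<and> odd (tl v!Suc i)"
  proof
    fix i assume "i \<in> descents (tl v)"
    then have i: "Suc i < length (tl v)" and lt: "tl v!Suc i < tl v!i" unfolding descents_def by auto
    have "okp 0 (tl v!i) (tl v!Suc i)" using successively_nth[OF S' i] .
    moreover have "tl v!i \<in> set (tl v)" using i by simp
    then have "tl v!i \<noteq> 0" using n0 by (metis (full_types))
    ultimately show "odd (tl v!i) \<and> odd (tl v!Suc i)" using lt unfolding okp_def topk_def by auto
  qed
  have "last (tl v) = last v" using vv ne' by (metis last_ConsR)
  then show ?thesis using d' st' D l vv unfolding Wstar_set_def perms_def by auto
qed

lemma W_bij: "bij_betw (\<lambda>\<sigma>. 0 # \<sigma>) (Wstar_set n) (CC n 0)"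
  by (rule bij_betw_byWitness[where f'=tl]) (use W_in W_out in auto)

lemma X_in: assumes s: "\<tau> \<in> X_set n" shows "0 # \<tau> @ [2*n+1] \<in> CC n n"
proof -
  have d: "distinct \<tau>" and st: "set \<tau> = {1..2*n}" and D: "\<forall>i\<in>descents \<tau>. even (\<tau>!i) \<and> odd (\<tau>!Suc i)"
    using s unfolding X_set_def perms_def by auto
  have "successively (okp n) \<tau>"
    unfolding successively_conv_nth
  proof (intro allI impI)
    fix i assume i: "Suc i < length \<tau>"
    have neq: "\<tau>!i \<noteq> \<tau>!Suc i" using d i by (simp add: nth_eq_iff_index_eq)
    have "\<tau>!i \<in> set \<tau>" using i by simp
    then have le: "\<tau>!i \<le> 2*n" using st by auto
    show "okp n (\<tau>!i) (\<tau>!Suc i)"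
    proof (cases "\<tau>!i < \<tau>!Suc i")
      case True then show ?thesis by (simp add: okp_def)
    next
      case False
      then have "i \<in> descents \<tau>" using neq i unfolding descents_def by auto
      then show ?thesis using D le unfolding okp_def topk_def by auto
    qed
  qed
  moreover have "\<tau> \<noteq> [] \<Longrightarrow> last \<tau> < 2*n+1" using st last_in_set[of \<tau>] by fastforce
  ultimately have "successively (okp n) (\<tau> @ [2*n+1])" by (auto simp: successively_append_iff okp_def)
  moreover have "0 < hd (\<tau> @ [2*n+1])" using st hd_in_set[of \<tau>] by (cases "\<tau> = []") auto
  ultimately have "successively (okp n) (0 # \<tau> @ [2*n+1])" by (simp add: successively_Cons okp_def)
  moreover have "distinct (0 # \<tau> @ [2*n+1])" using d st by auto
  moreover have "set (0 # \<tau> @ [2*n+1]) = {0..2*n+1}" using st by auto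
  ultimately show ?thesis unfolding CC_def by auto
qed

lemma X_out: assumes v: "v \<in> CC n n" shows "butlast (tl v) \<in> X_set n \<and> 0 # butlast (tl v) @ [2*n+1] = v"
proof -
  have d: "distinct v" and st: "set v = {0..2*n+1}" and ne: "v \<noteq> []" and h: "hd v = 0"
    and S: "successively (okp n) v" and l: "odd (last v)" "2*n < last v" using v unfolding CC_def by auto
  have "last v \<in> set v" using ne by simp
  then have lv: "last v = 2*n+1" using st l by auto
  obtain r where vv: "v = 0 # r" using ne h by (cases v) auto
  have tne: "r \<noteq> []"
  proof
    assume "r = []"
    then have "v = [0]" using vv by simp
    then show False using lv by simp
  qed
  define \<tau> where "\<tau> = butlast r"
  have lt: "last r = 2*n+1" using lv vv tne by simp
  have "0 # \<tau> @ [2*n+1] = 0 # butlast r @ [last r]" using lt unfolding \<tau>_def by simp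
  also have "\<dots> = v" using vv tne by simp
  finally have vt: "v = 0 # \<tau> @ [2*n+1]" by simp
  have tlv: "butlast (tl v) = \<tau>" unfolding \<tau>_def using vv by simp
  have dt: "distinct \<tau>" and n0: "0 \<notin> set \<tau>" and nt: "2*n+1 \<notin> set \<tau>" using d vt by auto
  have "set v = {0, 2*n+1} \<union> set \<tau>" using vt by auto
  then have "set \<tau> = set v - {0, 2*n+1}" using n0 nt by auto
  then have "set \<tau> = {0..2*n+1} - {0, 2*n+1}" using st by simp
  moreover have "{0..2*n+1} - {0, 2*n+1} = {1..(2*n::nat)}" by (auto simp: atLeastAtMost_iff)
  ultimately have stt: "set \<tau> = {1..2*n}" by simp
  have St: "successively (okp n) \<tau>" using S vt by (simp add: successively_append_iff successively_Cons)
  have D: "\<forall>i\<in>descents \<tau>. even (\<tau>!i) \<and> odd (\<tau>!Suc i)"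
  proof
    fix i assume "i \<in> descents \<tau>"
    then have i: "Suc i < length \<tau>" and lt: "\<tau>!Suc i < \<tau>!i" unfolding descents_def by auto
    have "okp n (\<tau>!i) (\<tau>!Suc i)" using successively_nth[OF St i] .
    moreover have "\<tau>!i \<in> set \<tau>" using i by simp
    then have "\<tau>!i \<le> 2*n" using stt by auto
    ultimately show "even (\<tau>!i) \<and> odd (\<tau>!Suc i)" using lt unfolding okp_def topk_def by auto
  qed
  show ?thesis unfolding tlv using dt stt D vt unfolding X_set_def perms_def by auto
qed

lemma X_bij: "bij_betw (\<lambda>v. butlast (tl v)) (CC n n) (X_set n)"
  by (rule bij_betw_byWitness[where f'="\<lambda>\<tau>. 0 # \<tau> @ [2*n+1]"]) (use X_in X_out in auto)

lemma dc_X: "v \<in> CC n n \<Longrightarrow> dc (butlast (tl v)) = dc v"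
proof -
  assume v: "v \<in> CC n n"
  define \<tau> where "\<tau> = butlast (tl v)"
  have t: "\<tau> \<in> X_set n" and vt: "v = 0 # \<tau> @ [2*n+1]" using X_out[OF v] unfolding \<tau>_def by auto
  have st: "set \<tau> = {1..2*n}" using t unfolding X_set_def perms_def by auto
  have "\<tau> \<noteq> [] \<Longrightarrow> 0 < hd \<tau> \<and> last \<tau> < 2*n+1" using st hd_in_set[of \<tau>] last_in_set[of \<tau>] by fastforce
  then have "dc (0 # \<tau> @ [2*n+1]) = dc \<tau>" by (cases "\<tau> = []") (auto simp: dc_Cons dc_append)
  then have "dc v = dc \<tau>" using vt by simp
  then show ?thesis unfolding \<tau>_def by simp
qed

theorem mainTheorem9:
  fixes n :: nat
  assumes "n \<ge> 1"
  shows "(\<exists>f. bij_betw f (Wstar_set n) (X_set n) \<and> (\<forall>\<sigma>\<in>Wstar_set n. des (f \<sigma>) = des \<sigma>))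
       \<and> (\<forall>t :: 'a :: comm_semiring_1.
            (\<Sum>\<sigma>\<in>Wstar_set n. t ^ des \<sigma>) = (\<Sum>\<sigma>\<in>X_set n. t ^ des \<sigma>))"
proof -
  define f where "f = (\<lambda>v. butlast (tl v)) \<circ> FF n \<circ> (\<lambda>\<sigma>. 0 # \<sigma>)"
  have FFn: "bij_betw (FF n) (CC n 0) (CC n n)" "\<forall>w\<in>CC n 0. dc (FF n w) = dc w" using FF_bij[of n n] by auto
  have bf: "bij_betw f (Wstar_set n) (X_set n)"
    using bij_betw_trans[OF bij_betw_trans[OF W_bij FFn(1)] X_bij] unfolding f_def by (simp add: comp_assoc)
  have df: "\<forall>\<sigma>\<in>Wstar_set n. des (f \<sigma>) = des \<sigma>"
  proof
    fix \<sigma> assume s: "\<sigma> \<in> Wstar_set n"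
    have w0: "0 # \<sigma> \<in> CC n 0" using W_in[OF s] .
    have "FF n (0 # \<sigma>) \<in> CC n n" using bij_betwE[OF FFn(1)] w0 by auto
    then have "dc (f \<sigma>) = dc (FF n (0 # \<sigma>))" unfolding f_def using dc_X by simp
    also have "\<dots> = dc (0 # \<sigma>)" using FFn(2) w0 by auto
    also have "\<dots> = dc \<sigma>" by (simp add: dc_Cons)
    finally show "des (f \<sigma>) = des \<sigma>" by (simp add: des_dc)
  qed
  have "\<forall>t :: 'a :: comm_semiring_1. (\<Sum>\<sigma>\<in>Wstar_set n. t ^ des \<sigma>) = (\<Sum>\<sigma>\<in>X_set n. t ^ des \<sigma>)"
  proof
    fix t :: 'a
    have "(\<Sum>\<sigma>\<in>Wstar_set n. t ^ des \<sigma>) = (\<Sum>\<sigma>\<in>Wstar_set n. t ^ des (f \<sigma>))" using df by simp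
    also have "\<dots> = (\<Sum>\<sigma>\<in>X_set n. t ^ des \<sigma>)" by (rule sum.reindex_bij_betw[OF bf])
    finally show "(\<Sum>\<sigma>\<in>Wstar_set n. t ^ des \<sigma>) = (\<Sum>\<sigma>\<in>X_set n. t ^ des \<sigma>)" .
  qed
  then show ?thesis using bf df by blast
qed

end
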